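(* Let $d\ge 1$, let $F=(F_1,\dots,F_k)$ be $d\times d$ positive semidefinite matrices with $\sum_{j=1}^k F_j\preceq \mathbb{I}$, let $\rho_0$ be a $d\times d$ density matrix, and let $\sigma_0=\mathbb{I}/d$. Consider the quantum iterative scaling (QIS) update map $\lambda^{(t)}\mapsto\lambda^{(t+1)}$ on $\mathbb{R}^k$ given by $$Y^{(t)}=\exp\bigl(\ln\sigma_0+\lambda^{(t)}\cdot F\bigr),\qquad \delta^{(t)}_j=\ln\langle F_j,\rho_0\rangle-\ln\bigl\langle F_j, Y^{(t)}/\operatorname{tr}Y^{(t)}\bigr\rangle,\qquad \lambda^{(t+1)}=\lambda^{(t)}+\delta^{(t)}.$$ Then the Jacobian matrix of this map at $\lambda=\lambda^{(t)}$ equals $\mathbb{I}-P^{-1}L$, where, with $\xi=\exp(\lambda\cdot F)/\operatorname{tr}\exp(\lambda\cdot F)$, $P=\sum_j \operatorname{tr}(F_j\xi)\,|j\rangle\langle j|$ is the $k\times k$ diagonal matrix of the mean values of the $F_j$ in $\xi$, and $L$ is the $k\times k$ Hessian matrix of $\lambda\mapsto\ln\operatorname{tr}\exp(\lambda\cdot F)$.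
   Context: For real $\lambda\in\mathbb{R}^k$, $\lambda\cdot F=\sum_j\lambda_jF_j$. For matrices, $\langle A,B\rangle=\operatorname{tr}(A^\dagger B)$. $A\preceq B$ means $B-A$ is positive semidefinite. The map is considered at points where all logarithms are defined (the relevant traces are positive). *)

theory Defs
  imports "HOL-Analysis.Analysis"
begin

type_synonym 'd cmat = "complex^'d^'d"

definition adjoint_mat :: "'d::finite cmat \<Rightarrow> 'd cmat" where
  "adjoint_mat A = (\<chi> i j. cnj (A $ j $ i))"

definition hermitian :: "'d::finite cmat \<Rightarrow> bool" where
  "hermitian A \<longleftrightarrow> adjoint_mat A = A"

definition psd :: "'d::finite cmat \<Rightarrow> bool" where
  "psd A \<longleftrightarrow> hermitian A \<and>
     (\<forall>x::complex^'d. 0 \<le> Re (\<Sum>i\<in>UNIV. cnj (x $ i) * (A *v x) $ i))"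

definition loewner_le :: "'d::finite cmat \<Rightarrow> 'd cmat \<Rightarrow> bool" where
  "loewner_le A B \<longleftrightarrow> psd (B - A)"

definition density_matrix :: "'d::finite cmat \<Rightarrow> bool" where
  "density_matrix \<rho> \<longleftrightarrow> psd \<rho> \<and> trace \<rho> = 1"

definition hs_inner :: "'d::finite cmat \<Rightarrow> 'd cmat \<Rightarrow> complex" where
  "hs_inner A B = trace (adjoint_mat A ** B)"

fun mpow :: "'d::finite cmat \<Rightarrow> nat \<Rightarrow> 'd cmat" where
  "mpow A 0 = mat 1"
| "mpow A (Suc n) = A ** mpow A n"

definition mexp :: "'d::finite cmat \<Rightarrow> 'd cmat" where
  "mexp A = (\<Sum>n. (1 / fact n) *\<^sub>R mpow A n)"

text \<open>Matrix logarithm: the (unique) Hermitian matrix whose exponential is A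
  (used only for positive definite A).\<close>
definition mlog :: "'d::finite cmat \<Rightarrow> 'd cmat" where
  "mlog A = (THE H. hermitian H \<and> mexp H = A)"

definition mdiv :: "'d::finite cmat \<Rightarrow> complex \<Rightarrow> 'd cmat" where
  "mdiv A c = (\<chi> i j. A $ i $ j / c)"

definition lin_comb :: "real^'k \<Rightarrow> ('k::finite \<Rightarrow> 'd::finite cmat) \<Rightarrow> 'd cmat" where
  "lin_comb lam F = (\<Sum>j\<in>UNIV. lam $ j *\<^sub>R F j)"

definition maxmixed :: "'d::finite cmat" where
  "maxmixed = (1 / real CARD('d)) *\<^sub>R mat 1"

text \<open>The QIS update map lambda^(t) |-> lambda^(t+1). The traces involved are real
  (products of PSD matrices), so logarithms are taken of their real parts.\<close>
definition qis_map :: "('k::finite \<Rightarrow> 'd::finite cmat) \<Rightarrow> 'd cmat \<Rightarrow> real^'k \<Rightarrow> real^'k" where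
  "qis_map F \<rho>0 lam =
     (let Y = mexp (mlog maxmixed + lin_comb lam F)
      in lam + (\<chi> j. ln (Re (hs_inner (F j) \<rho>0)) - ln (Re (hs_inner (F j) (mdiv Y (trace Y))))))"

definition xi_state :: "('k::finite \<Rightarrow> 'd::finite cmat) \<Rightarrow> real^'k \<Rightarrow> 'd cmat" where
  "xi_state F lam = mdiv (mexp (lin_comb lam F)) (trace (mexp (lin_comb lam F)))"

definition P_mat :: "('k::finite \<Rightarrow> 'd::finite cmat) \<Rightarrow> real^'k \<Rightarrow> real^'k^'k" where
  "P_mat F lam = (\<chi> i j. if i = j then Re (trace (F j ** xi_state F lam)) else 0)"

definition log_partition :: "('k::finite \<Rightarrow> 'd::finite cmat) \<Rightarrow> real^'k \<Rightarrow> real" where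
  "log_partition F lam = ln (Re (trace (mexp (lin_comb lam F))))"

definition gradient :: "(real^'k \<Rightarrow> real) \<Rightarrow> real^'k \<Rightarrow> real^'k" where
  "gradient g x = (\<chi> j. frechet_derivative g (at x) (axis j 1))"

definition hessian :: "(real^'k::finite \<Rightarrow> real) \<Rightarrow> real^'k \<Rightarrow> real^'k^'k" where
  "hessian g x = jacobian (gradient g) (at x)"

end

theory Submission
  imports Defs
begin


lemma mvec_scaleR: "(A::'d::finite cmat) *v (c *\<^sub>R x) = c *\<^sub>R (A *v x)"
  by (simp add: vec_eq_iff matrix_vector_mult_def scaleR_sum_right)

lemma linear_mvec: "linear (\<lambda>x::complex^'d::finite. (A::'d cmat) *v x)"
  by (rule linearI) (simp_all add: matrix_vector_right_distrib mvec_scaleR)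

lemma bl_mvec: "bounded_linear (\<lambda>x::complex^'d::finite. (A::'d cmat) *v x)"
  using linear_conv_bounded_linear linear_mvec by blast

lemma mvec_axis: "((A::'d::finite cmat) *v axis j 1) $ i = A $ i $ j"
  by (simp add: matrix_vector_mult_def axis_def if_distrib cong: if_cong)

lemma matrix_add_rdistrib': "((B + C) ** (A::'d::finite cmat)) = (B ** A) + (C ** A)"
  by (vector matrix_matrix_mult_def sum.distrib[symmetric] field_simps)

lemma mvec_eq0: "(\<forall>x. (A::'d::finite cmat) *v x = 0) \<Longrightarrow> A = 0"
  by (metis mvec_axis vec_eq_iff zero_index)

typedef 'd mx = "UNIV :: ('d::finite) cmat set" morphisms mrep mabs by auto

setup_lifting type_definition_mx

instantiation mx :: (finite) real_normed_algebra_1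
begin

lift_definition norm_mx :: "'a mx \<Rightarrow> real" is "\<lambda>A. onorm (\<lambda>x. A *v x)" .
lift_definition minus_mx :: "'a mx \<Rightarrow> 'a mx \<Rightarrow> 'a mx" is "(-)" .
lift_definition plus_mx :: "'a mx \<Rightarrow> 'a mx \<Rightarrow> 'a mx" is "(+)" .
lift_definition uminus_mx :: "'a mx \<Rightarrow> 'a mx" is "uminus" .
lift_definition zero_mx :: "'a mx" is "0" .
lift_definition one_mx :: "'a mx" is "mat 1" .
lift_definition times_mx :: "'a mx \<Rightarrow> 'a mx \<Rightarrow> 'a mx" is "(**)" .
lift_definition scaleR_mx :: "real \<Rightarrow> 'a mx \<Rightarrow> 'a mx" is "scaleR" .

definition dist_mx :: "'a mx \<Rightarrow> 'a mx \<Rightarrow> real"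
  where "dist_mx a b = norm (a - b)"

definition uniformity_mx :: "('a mx \<times> 'a mx) filter" where
  "uniformity_mx = (INF e\<in>{0 <..}. principal {(x, y). dist x y < e})"

definition open_mx :: "'a mx set \<Rightarrow> bool"
  where "open_mx S = (\<forall>x\<in>S. \<forall>\<^sub>F (x', y) in uniformity. x' = x \<longrightarrow> y \<in> S)"

definition sgn_mx :: "'a mx \<Rightarrow> 'a mx"
  where "sgn_mx x = scaleR (inverse (norm x)) x"

instance
proof
  fix a b c :: "'a mx" and r s :: real
  show "a + b + c = a + (b + c)" by transfer (simp add: algebra_simps)
  show "a + b = b + a" by transfer (simp add: algebra_simps)
  show "0 + a = a" by transfer simp
  show "- a + a = 0" by transfer simp
  show "a - b = a + - b" by transfer simp
  show "r *\<^sub>R (a + b) = r *\<^sub>R a + r *\<^sub>R b" by transfer (simp add: scaleR_right_distrib)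
  show "(r + s) *\<^sub>R a = r *\<^sub>R a + s *\<^sub>R a" by transfer (simp add: scaleR_left_distrib)
  show "r *\<^sub>R s *\<^sub>R a = (r * s) *\<^sub>R a" by transfer simp
  show "1 *\<^sub>R a = a" by transfer simp
  show "a * b * c = a * (b * c)" by transfer (simp add: matrix_mul_assoc)
  show "(a + b) * c = a * c + b * c" by transfer (simp add: matrix_add_rdistrib')
  show "a * (b + c) = a * b + a * c" by transfer (simp add: matrix_add_ldistrib)
  show "r *\<^sub>R a * b = r *\<^sub>R (a * b)" by transfer (simp add: scalar_matrix_assoc)
  show "a * r *\<^sub>R b = r *\<^sub>R (a * b)" by transfer (simp add: matrix_scalar_ac scalar_matrix_assoc)
  show "1 * a = a" by transfer simp
  show "a * 1 = a" by transfer simp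
  show "(0::'a mx) \<noteq> 1"
  proof transfer
    obtain i :: 'a where True by auto
    have "(mat 1 :: 'a cmat) $ i $ i = 1" by (simp add: mat_def)
    then show "(0::'a cmat) \<noteq> mat 1" by auto
  qed
  show "dist a b = norm (a - b)" by (simp add: dist_mx_def)
  show "sgn a = inverse (norm a) *\<^sub>R a" by (simp add: sgn_mx_def)
  show "(uniformity :: ('a mx \<times> 'a mx) filter) = (INF e\<in>{0 <..}. principal {(x, y). dist x y < e})"
    by (simp add: uniformity_mx_def)
  fix U :: "'a mx set"
  show "open U = (\<forall>x\<in>U. \<forall>\<^sub>F (x', y) in uniformity. x' = x \<longrightarrow> y \<in> U)"
    by (simp add: open_mx_def)
  show "(norm a = 0) = (a = 0)"
    by transfer (auto simp: onorm_eq_0[OF bl_mvec] mvec_eq0 onorm_zero)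
  show "norm (a + b) \<le> norm a + norm b"
  proof transfer
    fix A B :: "'a cmat"
    have "(\<lambda>x. (A + B) *v x) = (\<lambda>x. A *v x + B *v x)"
      by (auto simp: matrix_vector_mult_add_rdistrib)
    then show "onorm (\<lambda>x. (A + B) *v x) \<le> onorm (\<lambda>x. A *v x) + onorm (\<lambda>x. B *v x)"
      using onorm_triangle[OF bl_mvec bl_mvec] by simp
  qed
  show "norm (r *\<^sub>R a) = \<bar>r\<bar> * norm a"
  proof transfer
    fix A :: "'a cmat" and r :: real
    have "(\<lambda>x. (r *\<^sub>R A) *v x) = (\<lambda>x. r *\<^sub>R (A *v x))"
      by (auto simp: vec_eq_iff matrix_vector_mult_def scaleR_sum_right)
    then show "onorm (\<lambda>x. (r *\<^sub>R A) *v x) = \<bar>r\<bar> * onorm (\<lambda>x. A *v x)"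
      using onorm_scaleR[OF bl_mvec] by simp
  qed
  show "norm (a * b) \<le> norm a * norm b"
  proof transfer
    fix A B :: "'a cmat"
    have "(\<lambda>x. (A ** B) *v x) = (\<lambda>x. A *v x) \<circ> (\<lambda>x. B *v x)"
      by (auto simp: matrix_vector_mul_assoc)
    then show "onorm (\<lambda>x. (A ** B) *v x) \<le> onorm (\<lambda>x. A *v x) * onorm (\<lambda>x. B *v x)"
      using onorm_compose[OF bl_mvec bl_mvec, of A B] by (simp only:)
  qed
  show "norm (1::'a mx) = 1"
    by transfer (simp add: onorm_id)
qed
end


lemma norm_le_sum_cart: "norm (x::'a::real_normed_vector^'n::finite) \<le> (\<Sum>i\<in>UNIV. norm (x$i))"
  by (simp add: norm_vec_def L2_set_le_sum)

definition N1 :: "'d::finite cmat \<Rightarrow> real" where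
  "N1 A = (\<Sum>i\<in>UNIV. \<Sum>j\<in>UNIV. norm (A$i$j))"

lemma N1_mvec: "norm (A *v x) \<le> N1 A * norm x"
proof -
  have "norm (A *v x) \<le> (\<Sum>i\<in>UNIV. norm ((A *v x)$i))" by (rule norm_le_sum_cart)
  also have "\<dots> \<le> (\<Sum>i\<in>UNIV. \<Sum>j\<in>UNIV. norm (A$i$j) * norm x)"
  proof (rule sum_mono)
    fix i
    have "norm ((A *v x)$i) = norm (\<Sum>j\<in>UNIV. A$i$j * x$j)" by (simp add: matrix_vector_mult_def)
    also have "\<dots> \<le> (\<Sum>j\<in>UNIV. norm (A$i$j * x$j))" by (rule norm_sum)
    also have "\<dots> \<le> (\<Sum>j\<in>UNIV. norm (A$i$j) * norm x)"
      by (rule sum_mono) (simp add: norm_mult mult_left_mono Finite_Cartesian_Product.norm_nth_le)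
    finally show "norm ((A *v x)$i) \<le> (\<Sum>j\<in>UNIV. norm (A$i$j) * norm x)" .
  qed
  also have "\<dots> = N1 A * norm x" by (simp add: N1_def sum_distrib_right)
  finally show ?thesis .
qed

lemma N1_nonneg: "0 \<le> N1 A"
  by (simp add: N1_def sum_nonneg)

lemma onorm_le_N1: "onorm (\<lambda>x. A *v x) \<le> N1 A"
  by (rule onorm_bound[OF N1_nonneg]) (simp add: N1_mvec)

lemma norm_axis_le1: "norm (axis j (1::'a::real_normed_algebra_1)) \<le> 1"
proof -
  have "norm (axis j (1::'a)) \<le> (\<Sum>i\<in>UNIV. norm (axis j (1::'a) $ i))" by (rule norm_le_sum_cart)
  also have "\<dots> = 1" by (simp add: axis_def if_distrib cong: if_cong)
  finally show ?thesis .
qed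

lemma entry_le_onorm: "norm ((A::'d::finite cmat)$i$j) \<le> onorm (\<lambda>x. A *v x)"
proof -
  have "norm (A$i$j) = norm ((A *v axis j 1) $ i)" by (simp add: mvec_axis)
  also have "\<dots> \<le> norm (A *v axis j 1)" by (rule Finite_Cartesian_Product.norm_nth_le)
  also have "\<dots> \<le> onorm (\<lambda>x. A *v x) * norm (axis j (1::complex))" by (rule onorm[OF bl_mvec])
  also have "\<dots> \<le> onorm (\<lambda>x. A *v x)"
    using norm_axis_le1[of j] onorm_pos_le[OF bl_mvec, of A]
    by (simp add: mult_left_le)
  finally show ?thesis .
qed

lemma entry_le_norm: "norm ((A::'d::finite cmat)$i$j) \<le> norm A"
  by (meson Finite_Cartesian_Product.norm_nth_le order_trans[of _ "norm (A$i)"])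

lemma N1_le_onorm: "N1 (A::'d::finite cmat) \<le> real CARD('d) * real CARD('d) * onorm (\<lambda>x. A *v x)"
proof -
  have "N1 A \<le> (\<Sum>i\<in>(UNIV::'d set). \<Sum>j\<in>(UNIV::'d set). onorm (\<lambda>x. A *v x))"
    unfolding N1_def by (intro sum_mono entry_le_onorm)
  then show ?thesis by simp
qed

lemma N1_le_norm: "N1 (A::'d::finite cmat) \<le> real CARD('d) * real CARD('d) * norm A"
proof -
  have "N1 A \<le> (\<Sum>i\<in>(UNIV::'d set). \<Sum>j\<in>(UNIV::'d set). norm A)"
    unfolding N1_def by (intro sum_mono entry_le_norm)
  then show ?thesis by simp
qed

lemma norm_le_N1: "norm (A::'d::finite cmat) \<le> N1 A"
proof -
  have "norm A \<le> (\<Sum>i\<in>UNIV. norm (A$i))" by (rule norm_le_sum_cart)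
  also have "\<dots> \<le> N1 A" unfolding N1_def by (intro sum_mono norm_le_sum_cart)
  finally show ?thesis .
qed

lemma norm_mx_def': "norm (x::'d::finite mx) = onorm (\<lambda>v. mrep x *v v)"
  by transfer simp

definition CC :: "'d::finite itself \<Rightarrow> real" where
  "CC _ = real CARD('d) * real CARD('d)"

lemma norm_mrep_le: "norm (mrep (x::'d::finite mx)) \<le> CC TYPE('d) * norm x"
  using norm_le_N1[of "mrep x"] N1_le_onorm[of "mrep x"] by (simp add: norm_mx_def' CC_def)

lemma norm_mabs_le: "norm (mabs (A::'d::finite cmat)) \<le> CC TYPE('d) * norm A"
  using onorm_le_N1[of A] N1_le_norm[of A] by (simp add: norm_mx_def' mabs_inverse CC_def)

lemma mrep_add: "mrep (a + b) = mrep a + mrep b" by transfer simp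
lemma mrep_diff: "mrep (a - b) = mrep a - mrep b" by transfer simp
lemma mrep_uminus: "mrep (- a) = - mrep a" by transfer simp
lemma mrep_scaleR: "mrep (r *\<^sub>R a) = r *\<^sub>R mrep a" by transfer simp
lemma mrep_zero: "mrep 0 = 0" by transfer simp
lemma mrep_one: "mrep 1 = mat 1" by transfer simp
lemma mrep_mult: "mrep (a * b) = mrep a ** mrep b" by transfer simp
lemma mabs_add: "mabs (a + b) = mabs a + mabs b" by transfer simp
lemma mabs_scaleR: "mabs (r *\<^sub>R a) = r *\<^sub>R mabs a" by transfer simp
lemma mabs_mult: "mabs (a ** b) = mabs a * mabs b" by transfer simp
lemmas mrep_simps = mrep_add mrep_diff mrep_uminus mrep_scaleR mrep_zero mrep_one mrep_mult mrep_inverse mabs_inverse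

lemma bl_mrep: "bounded_linear (mrep :: 'd::finite mx \<Rightarrow> 'd cmat)"
proof
  show "\<exists>K. \<forall>x::'d mx. norm (mrep x) \<le> norm x * K"
    using norm_mrep_le by (metis mult.commute)
qed (simp_all add: mrep_simps)

lemma bl_mabs: "bounded_linear (mabs :: 'd::finite cmat \<Rightarrow> 'd mx)"
proof
  show "\<exists>K. \<forall>x::'d cmat. norm (mabs x) \<le> norm x * K"
    using norm_mabs_le by (metis mult.commute)
qed (simp_all add: mabs_add mabs_scaleR)

instance mx :: (finite) banach
proof
  fix X :: "nat \<Rightarrow> 'a mx"
  assume "Cauchy X"
  then have "Cauchy (\<lambda>n. mrep (X n))" by (rule bounded_linear.Cauchy[OF bl_mrep])
  then obtain L where "(\<lambda>n. mrep (X n)) \<longlonglongrightarrow> L" using convergent_eq_Cauchy convergent_def by blast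
  then have "(\<lambda>n. mabs (mrep (X n))) \<longlonglongrightarrow> mabs L" by (rule bounded_linear.tendsto[OF bl_mabs])
  then show "convergent X" by (auto simp: mrep_inverse convergent_def)
qed



fun Dp :: "nat \<Rightarrow> 'a::real_normed_algebra_1 \<Rightarrow> 'a \<Rightarrow> 'a" where
  "Dp 0 A H = 0"
| "Dp (Suc n) A H = A * Dp n A H + H * A^n"

lemma power_has_derivative:
  "((\<lambda>x::'a::real_normed_algebra_1. x^n) has_derivative Dp n A) (at A within S)"
proof (induction n)
  case 0
  have "Dp 0 A = (\<lambda>h. 0)" by (rule ext) simp
  then show ?case by simp
next
  case (Suc n)
  have "((\<lambda>x. x * x^n) has_derivative (\<lambda>h. A * Dp n A h + h * A^n)) (at A within S)"
    using has_derivative_mult[OF has_derivative_ident Suc.IH] by simp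
  moreover have "Dp (Suc n) A = (\<lambda>h. A * Dp n A h + h * A^n)" by (rule ext) simp
  ultimately show ?case by simp
qed

lemma Dp_bound:
  fixes A H :: "'a::real_normed_algebra_1"
  assumes "norm A \<le> K" "1 \<le> K"
  shows "norm (Dp n A H) \<le> real n * K^n * norm H"
proof (induction n)
  case 0
  then show ?case by simp
next
  case (Suc n)
  have K0: "0 \<le> K" using assms by simp
  have "norm (Dp (Suc n) A H) \<le> norm A * norm (Dp n A H) + norm H * norm (A^n)"
    by (simp add: norm_triangle_le norm_mult_ineq add_mono)
  also have "\<dots> \<le> K * (real n * K^n * norm H) + norm H * K^n"
  proof (rule add_mono)
    show "norm A * norm (Dp n A H) \<le> K * (real n * K ^ n * norm H)"
      using Suc.IH assms(1) K0 by (intro mult_mono) auto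
    have "norm (A^n) \<le> K^n"
      using norm_power_ineq[of A n] power_mono[OF assms(1), of n] by simp
    then show "norm H * norm (A ^ n) \<le> norm H * K ^ n" by (simp add: mult_left_mono)
  qed
  also have "\<dots> \<le> real (Suc n) * K^(Suc n) * norm H"
  proof -
    have "K^n \<le> K^Suc n" using assms(2) by (simp add: power_increasing)
    then have "norm H * K^n \<le> norm H * K^Suc n" by (simp add: mult_left_mono)
    then show ?thesis by (simp add: algebra_simps)
  qed
  finally show ?case .
qed

lemma exp_has_derivative_gen:
  fixes A :: "'a::{real_normed_algebra_1,banach}"
  shows "(exp has_derivative (\<lambda>H. \<Sum>n. Dp n A H /\<^sub>R fact n)) (at A)"
proof -
  define R where "R = norm A + 1"
  have R1: "1 \<le> R" by (simp add: R_def)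
  define S where "S = ball (0::'a) R"
  have AS: "A \<in> S" by (simp add: S_def R_def)
  define M where "M n = (2*R)^n / fact n" for n
  have Mnn: "0 \<le> M n" for n using R1 by (simp add: M_def)
  have sM: "summable M"
  proof -
    have "M = (\<lambda>n. inverse (fact n) * (2*R)^n)" by (rule ext) (simp add: M_def divide_inverse mult.commute)
    then show ?thesis using summable_exp[of "2*R"] by simp
  qed
  have bound: "norm (Dp n x h /\<^sub>R fact n) \<le> M n * norm h" if "x \<in> S" for n x h
  proof -
    have "norm x \<le> R" using that by (simp add: S_def)
    then have "norm (Dp n x h) \<le> real n * R^n * norm h" using Dp_bound R1 by blast
    also have "\<dots> \<le> (2*R)^n * norm h"
    proof -
      have "real n \<le> 2^n" using less_exp[of n] by (metis less_imp_le of_nat_le_iff of_nat_numeral of_nat_power)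
      then have "real n * R^n \<le> 2^n * R^n" using R1 by (intro mult_right_mono) auto
      then show ?thesis by (simp add: mult_right_mono power_mult_distrib)
    qed
    finally show ?thesis by (simp add: M_def divide_simps mult.commute)
  qed
  have sD: "summable (\<lambda>n. Dp n x h /\<^sub>R fact n)" if "x \<in> S" for x h
    by (rule summable_comparison_test'[OF summable_mult2[OF sM, of "norm h"]]) (use bound that in auto)
  have "\<exists>g. \<forall>x\<in>S. (\<lambda>n. x^n /\<^sub>R fact n) sums (g x) \<and>
          (g has_derivative (\<lambda>H. \<Sum>n. Dp n x H /\<^sub>R fact n)) (at x within S)"
  proof (rule has_derivative_series[where f' = "\<lambda>n x H. Dp n x H /\<^sub>R fact n"])
    show "convex S" by (simp add: S_def)
    show "((\<lambda>x. x ^ n /\<^sub>R fact n) has_derivative (\<lambda>H. Dp n x H /\<^sub>R fact n)) (at x within S)"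
      if "x \<in> S" for n x
      using has_derivative_scaleR_right[OF power_has_derivative[of n x S], of "inverse (fact n)"]
      by simp
    show "A \<in> S" by (rule AS)
    show "(\<lambda>n. A ^ n /\<^sub>R fact n) sums exp A" by (rule exp_converges)
    fix e :: real assume "0 < e"
    obtain N where N: "\<forall>n\<ge>N. norm (\<Sum>i. M (i + n)) < e"
      using suminf_exist_split[OF \<open>0 < e\<close> sM] by blast
    show "\<forall>\<^sub>F n in sequentially. \<forall>x\<in>S. \<forall>h. norm ((\<Sum>i<n. Dp i x h /\<^sub>R fact i) - (\<Sum>n. Dp n x h /\<^sub>R fact n)) \<le> e * norm h"
      unfolding eventually_sequentially
    proof (intro exI[of _ N] allI impI ballI)
      fix n x h assume n: "N \<le> n" and x: "x \<in> S"
      have "norm ((\<Sum>i<n. Dp i x h /\<^sub>R fact i) - (\<Sum>n. Dp n x h /\<^sub>R fact n))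
          = norm (\<Sum>i. Dp (i + n) x h /\<^sub>R fact (i + n))"
        using suminf_minus_initial_segment[OF sD[OF x, of h], of n] by (simp add: norm_minus_commute)
      also have "\<dots> \<le> (\<Sum>i. M (i + n) * norm h)"
        by (rule norm_suminf_le) (use bound x summable_ignore_initial_segment[OF summable_mult2[OF sM]] in auto)
      also have "\<dots> = (\<Sum>i. M (i + n)) * norm h"
        by (rule suminf_mult2[symmetric]) (rule summable_ignore_initial_segment[OF sM])
      also have "\<dots> \<le> e * norm h"
      proof -
        have "norm (\<Sum>i. M (i + n)) < e" using N n by blast
        then have "(\<Sum>i. M (i + n)) \<le> e" by simp
        then show ?thesis by (simp add: mult_right_mono)
      qed
      finally show "norm ((\<Sum>i<n. Dp i x h /\<^sub>R fact i) - (\<Sum>n. Dp n x h /\<^sub>R fact n)) \<le> e * norm h" .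
    qed
  qed
  then obtain g where g: "\<And>x. x \<in> S \<Longrightarrow> (\<lambda>n. x^n /\<^sub>R fact n) sums (g x)"
    "\<And>x. x \<in> S \<Longrightarrow> (g has_derivative (\<lambda>H. \<Sum>n. Dp n x H /\<^sub>R fact n)) (at x within S)"
    by blast
  have gexp: "g x = exp x" if "x \<in> S" for x
    using sums_unique2[OF g(1)[OF that] exp_converges] .
  have oS: "open S" by (simp add: S_def)
  have "(g has_derivative (\<lambda>H. \<Sum>n. Dp n A H /\<^sub>R fact n)) (at A)"
    using g(2)[OF AS] at_within_open[OF AS oS] by simp
  then show ?thesis
    by (rule has_derivative_transform_within_open[OF _ oS AS]) (simp add: gexp)
qed


lemma summable_Dp:
  fixes A :: "'a::{real_normed_algebra_1,banach}"
  shows "summable (\<lambda>n. Dp n A H /\<^sub>R fact n)"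
proof -
  define R where "R = norm A + 1"
  have R1: "1 \<le> R" by (simp add: R_def)
  define M where "M n = (2*R)^n / fact n" for n
  have sM: "summable M"
  proof -
    have "M = (\<lambda>n. inverse (fact n) * (2*R)^n)" by (rule ext) (simp add: M_def divide_inverse mult.commute)
    then show ?thesis using summable_exp[of "2*R"] by simp
  qed
  have bound: "norm (Dp n A H /\<^sub>R fact n) \<le> M n * norm H" for n
  proof -
    have "norm A \<le> R" by (simp add: R_def)
    then have "norm (Dp n A H) \<le> real n * R^n * norm H" using Dp_bound R1 by blast
    also have "\<dots> \<le> (2*R)^n * norm H"
    proof -
      have "real n \<le> 2^n" using less_exp[of n] by (metis less_imp_le of_nat_le_iff of_nat_numeral of_nat_power)
      then have "real n * R^n \<le> 2^n * R^n" using R1 by (intro mult_right_mono) auto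
      then show ?thesis by (simp add: mult_right_mono power_mult_distrib)
    qed
    finally show ?thesis by (simp add: M_def divide_simps mult.commute)
  qed
  show ?thesis
    by (rule summable_comparison_test'[OF summable_mult2[OF sM, of "norm H"]]) (use bound in auto)
qed



lemma mrep_power: "mrep (x ^ n) = mpow (mrep x) n"
  by (induction n) (simp_all add: mrep_simps)

lemma mrep_exp_sums: "(\<lambda>n. (1 / fact n) *\<^sub>R mpow (mrep x) n) sums mrep (exp (x::'d::finite mx))"
proof -
  have "(\<lambda>n. mrep (x^n /\<^sub>R fact n)) sums mrep (exp x)"
    by (rule bounded_linear.sums[OF bl_mrep exp_converges])
  then show ?thesis by (simp add: mrep_scaleR mrep_power divide_inverse)
qed

lemma mexp_eq: "mexp A = mrep (exp (mabs A))"
  unfolding mexp_def using mrep_exp_sums[of "mabs A"] by (simp add: mabs_inverse sums_iff)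

lemma mexp_eq': "mexp (mrep x) = mrep (exp x)"
  by (simp add: mexp_eq mrep_inverse)

definition adjm :: "'d::finite mx \<Rightarrow> 'd mx" where
  "adjm x = mabs (adjoint_mat (mrep x))"

lemma adjoint_mult: "adjoint_mat (A ** B) = adjoint_mat B ** adjoint_mat (A::'d::finite cmat)"
  by (simp add: adjoint_mat_def matrix_matrix_mult_def vec_eq_iff mult.commute)

lemma adjoint_add: "adjoint_mat (A + B) = adjoint_mat A + adjoint_mat (B::'d::finite cmat)"
  by (simp add: adjoint_mat_def vec_eq_iff)

lemma adjoint_scaleR: "adjoint_mat (r *\<^sub>R A) = r *\<^sub>R adjoint_mat (A::'d::finite cmat)"
  by (simp add: adjoint_mat_def vec_eq_iff)

lemma adjoint_adjoint: "adjoint_mat (adjoint_mat A) = (A::'d::finite cmat)"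
  by (simp add: adjoint_mat_def vec_eq_iff)

lemma adjoint_one: "adjoint_mat (mat 1) = (mat 1 :: 'd::finite cmat)"
  by (simp add: adjoint_mat_def vec_eq_iff mat_def)

lemma linear_adjoint: "linear (adjoint_mat :: 'd::finite cmat \<Rightarrow> 'd cmat)"
  by (rule linearI) (simp_all add: adjoint_add adjoint_scaleR)

lemma bl_adjoint: "bounded_linear (adjoint_mat :: 'd::finite cmat \<Rightarrow> 'd cmat)"
  using linear_conv_bounded_linear linear_adjoint by blast

lemma bl_adjm: "bounded_linear (adjm :: 'd::finite mx \<Rightarrow> 'd mx)"
  unfolding adjm_def
  by (rule bounded_linear_compose[OF bl_mabs bounded_linear_compose[OF bl_adjoint bl_mrep]])

lemma adjm_mult: "adjm (x * y) = adjm y * adjm x"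
  by (simp add: adjm_def mrep_mult adjoint_mult mabs_mult)

lemma adjm_power: "adjm x = x \<Longrightarrow> adjm (x ^ n) = x ^ n"
proof (induction n)
  case 0
  have "mabs (mat 1) = (1::'a mx)" by (metis mrep_one mrep_inverse)
  then show ?case by (simp add: adjm_def mrep_one adjoint_one)
next
  case (Suc n)
  have "adjm (x ^ Suc n) = adjm (x * x^n)" by simp
  also have "\<dots> = x^n * x" using Suc by (simp only: adjm_mult)
  also have "\<dots> = x ^ Suc n" by (simp add: power_commutes)
  finally show ?case .
qed

lemma adjm_exp: assumes "adjm x = x" shows "adjm (exp x) = exp x"
proof -
  have "(\<lambda>n. adjm (x^n /\<^sub>R fact n)) sums adjm (exp x)"
    by (rule bounded_linear.sums[OF bl_adjm exp_converges])
  moreover have "adjm (x^n /\<^sub>R fact n) = x^n /\<^sub>R fact n" for n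
  proof -
    have "adjm (x^n /\<^sub>R fact n) = (inverse (fact n)) *\<^sub>R adjm (x^n)"
      by (simp add: adjm_def mrep_scaleR adjoint_scaleR mabs_scaleR)
    then show ?thesis by (simp only: adjm_power[OF assms])
  qed
  ultimately have "(\<lambda>n. x^n /\<^sub>R fact n) sums adjm (exp x)" by simp
  then show ?thesis using exp_converges[of x] sums_unique2 by blast
qed

lemma hermitian_adjm: "hermitian (mrep x) \<longleftrightarrow> adjm x = x"
proof
  assume "hermitian (mrep x)"
  then show "adjm x = x" by (simp add: hermitian_def adjm_def mrep_inverse)
next
  assume "adjm x = x"
  then have "mrep (mabs (adjoint_mat (mrep x))) = mrep x" by (simp add: adjm_def)
  then show "hermitian (mrep x)" by (simp add: hermitian_def mabs_inverse)
qed

lemma hermitian_mexp: assumes "hermitian H" shows "hermitian (mexp H)"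
proof -
  have "adjm (mabs H) = mabs H" using hermitian_adjm[of "mabs H"] assms by (simp add: mabs_inverse)
  then have "adjm (exp (mabs H)) = exp (mabs H)" by (rule adjm_exp)
  then show ?thesis using hermitian_adjm[of "exp (mabs H)"] by (simp add: mexp_eq)
qed


lemma hermitian_entry: "hermitian A \<Longrightarrow> A $ i $ j = cnj (A $ j $ i)"
  unfolding hermitian_def adjoint_mat_def by (metis vec_lambda_beta)

lemma hermitian_entry': "hermitian A \<Longrightarrow> cnj (A $ i $ j) = A $ j $ i"
  by (simp add: hermitian_entry[of A j i])

lemma trace_herm_real: "hermitian A \<Longrightarrow> Im (trace A) = 0"
proof -
  assume h: "hermitian A"
  have "Im (A $ i $ i) = 0" for i using hermitian_entry[OF h, of i i]
    by (metis cnj.simps(2) equation_minus_iff neg_equal_zero)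
  then show ?thesis by (simp add: trace_def)
qed

lemma trace_herm_of_real: "hermitian A \<Longrightarrow> trace A = complex_of_real (Re (trace A))"
  using trace_herm_real complex_eq_iff by (metis Im_complex_of_real Re_complex_of_real)

lemma mabs_one: "mabs (mat 1) = (1::'d::finite mx)"
  by (metis mrep_one mrep_inverse)

lemma exp_nonzero: "exp (x::'a::{real_normed_algebra_1,banach}) \<noteq> 0"
  using exp_minus_inverse[of x] by auto

lemma hermitian_scaleR: "hermitian A \<Longrightarrow> hermitian (r *\<^sub>R A)"
  by (simp add: hermitian_def adjoint_scaleR)

lemma trace_exp_pos:
  assumes h: "hermitian H"
  shows "0 < Re (trace (mexp H))"
proof -
  define y where "y = (1/2) *\<^sub>R mabs H"
  have "exp (mabs H) = exp (y + y)" by (simp add: y_def scaleR_2[symmetric])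
  also have "\<dots> = exp y * exp y" by (rule exp_add_commuting) simp
  finally have e: "mexp H = mrep (exp y) ** mrep (exp y)" by (simp add: mexp_eq mrep_mult)
  define G where "G = mrep (exp y)"
  have hG: "hermitian G"
    unfolding G_def y_def using hermitian_mexp[OF hermitian_scaleR[OF h, of "1/2"]]
    by (simp add: mexp_eq mabs_scaleR)
  have "G \<noteq> 0" unfolding G_def using exp_nonzero[of y] by (metis mrep_inverse mrep_zero)
  then obtain i k where ik: "G $ i $ k \<noteq> 0" by (metis vec_eq_iff zero_index)
  have "Re (trace (mexp H)) = (\<Sum>i\<in>UNIV. \<Sum>k\<in>UNIV. (cmod (G $ i $ k))\<^sup>2)"
  proof -
    have "Re (G $ i $ k * G $ k $ i) = (cmod (G $ i $ k))\<^sup>2" for i k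
      using hermitian_entry[OF hG, of k i] complex_norm_square[of "G $ i $ k"]
      by (metis Re_complex_of_real)
    then show ?thesis by (simp add: e G_def[symmetric] trace_def matrix_matrix_mult_def)
  qed
  also have "\<dots> > 0"
  proof -
    have "0 < (cmod (G $ i $ k))\<^sup>2" using ik by simp
    also have "\<dots> \<le> (\<Sum>k\<in>UNIV. (cmod (G $ i $ k))\<^sup>2)"
      by (rule member_le_sum) auto
    also have "\<dots> \<le> (\<Sum>i\<in>UNIV. \<Sum>k\<in>UNIV. (cmod (G $ i $ k))\<^sup>2)"
      by (rule member_le_sum[where f = "\<lambda>i. \<Sum>k\<in>UNIV. (cmod (G $ i $ k))\<^sup>2"]) (auto intro: sum_nonneg)
    finally show ?thesis .
  qed
  finally show ?thesis .
qed


lemma herm_adj_sum: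
  assumes "hermitian (G::'d::finite cmat)"
  shows "(\<Sum>i\<in>UNIV. cnj (y$i) * (G *v z)$i) = (\<Sum>i\<in>UNIV. cnj ((G *v y)$i) * z$i)"
proof -
  have "(\<Sum>i\<in>UNIV. cnj (y$i) * (G *v z)$i) = (\<Sum>i\<in>UNIV. \<Sum>j\<in>UNIV. cnj (y$i) * G$i$j * z$j)"
    by (simp add: matrix_vector_mult_def sum_distrib_left mult.assoc)
  also have "\<dots> = (\<Sum>j\<in>UNIV. \<Sum>i\<in>UNIV. cnj (y$i) * G$i$j * z$j)" by (rule sum.swap)
  also have "\<dots> = (\<Sum>j\<in>UNIV. cnj ((G *v y)$j) * z$j)"
    by (simp add: matrix_vector_mult_def sum_distrib_right sum_distrib_left hermitian_entry'[OF assms] mult_ac)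
  finally show ?thesis .
qed

lemma re_cnj_mult: "Re (cnj w * w) = (cmod w)\<^sup>2"
  by (metis Re_complex_of_real complex_norm_square mult.commute)

lemma sq_herm_involution:
  assumes hG: "hermitian G" and AA: "(G ** G) ** (G ** G) = mat (1::complex)"
  shows "G ** G = (mat 1 :: 'd::finite cmat)"
proof -
  define A where "A = G ** G"
  have "A *v x = x" for x
  proof -
    define y where "y = A *v x - x"
    have Ay: "A *v y = - y"
      using AA by (simp add: y_def A_def[symmetric] matrix_vector_mult_diff_distrib matrix_vector_mul_assoc)
    have "(\<Sum>i\<in>UNIV. cnj (y$i) * (A *v y)$i) = (\<Sum>i\<in>UNIV. cnj ((G *v y)$i) * (G *v y)$i)"
      unfolding A_def matrix_vector_mul_assoc[symmetric] by (rule herm_adj_sum[OF hG])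
    then have "- (\<Sum>i\<in>UNIV. cnj (y$i) * y$i) = (\<Sum>i\<in>UNIV. cnj ((G *v y)$i) * (G *v y)$i)"
      by (simp add: Ay sum_negf)
    then have "- (\<Sum>i\<in>UNIV. Re (cnj (y$i) * y$i)) = (\<Sum>i\<in>UNIV. Re (cnj ((G *v y)$i) * (G *v y)$i))"
      by (metis Re_sum uminus_complex.sel(1))
    then have eq: "(\<Sum>i\<in>UNIV. (cmod (y$i))\<^sup>2) + (\<Sum>i\<in>UNIV. (cmod ((G *v y)$i))\<^sup>2) = 0"
      by (simp only: re_cnj_mult)
    have "y $ i = 0" for i
    proof -
      have "(cmod (y$i))\<^sup>2 \<le> (\<Sum>i\<in>UNIV. (cmod (y$i))\<^sup>2)" by (rule member_le_sum) auto
      moreover have "0 \<le> (\<Sum>i\<in>UNIV. (cmod ((G *v y)$i))\<^sup>2)" by (rule sum_nonneg) auto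
      ultimately have "(cmod (y$i))\<^sup>2 \<le> 0" using eq by linarith
      then show ?thesis by simp
    qed
    then have "y = 0" by (simp add: vec_eq_iff)
    then show ?thesis by (simp add: y_def)
  qed
  then have "\<forall>x. (A - mat 1) *v x = 0" by (simp add: matrix_vector_mult_diff_rdistrib)
  then have "A - mat 1 = 0" by (rule mvec_eq0)
  then show ?thesis by (simp add: A_def)
qed

lemma sq_herm_involution_mx:
  assumes "adjm g = g" "(g * g) * (g * g) = (1::'d::finite mx)"
  shows "g * g = 1"
proof -
  have "hermitian (mrep g)" using assms(1) hermitian_adjm by blast
  moreover have "(mrep g ** mrep g) ** (mrep g ** mrep g) = mat 1"
    using arg_cong[OF assms(2), of mrep] by (simp add: mrep_mult mrep_one)
  ultimately have "mrep g ** mrep g = mat 1" by (rule sq_herm_involution)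
  then have "mrep (g * g) = mrep 1" by (simp add: mrep_mult mrep_one)
  then show ?thesis by (metis mrep_inverse)
qed

lemma adjm_scaleR: "adjm (r *\<^sub>R x) = r *\<^sub>R adjm x"
  by (simp add: adjm_def mrep_scaleR adjoint_scaleR mabs_scaleR)

lemma exp_herm_one_zero:
  assumes hk: "adjm k = k" and ek: "exp k = (1::'d::finite mx)"
  shows "k = 0"
proof -
  have all: "exp (((1/2)^n) *\<^sub>R k) = 1" for n
  proof (induction n)
    case 0
    then show ?case using ek by simp
  next
    case (Suc n)
    define a where "a = exp (((1/2)^Suc n) *\<^sub>R k)"
    define g where "g = exp (((1/2)^Suc (Suc n)) *\<^sub>R k)"
    have gg: "g * g = a"
    proof -
      have "((1/2::real)^Suc (Suc n)) *\<^sub>R k + ((1/2)^Suc (Suc n)) *\<^sub>R k = ((1/2)^Suc n) *\<^sub>R k"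
        by (simp add: scaleR_left_distrib[symmetric])
      then show ?thesis unfolding g_def a_def by (metis exp_add_commuting)
    qed
    have aa: "a * a = 1"
    proof -
      have "((1/2::real)^Suc n) *\<^sub>R k + ((1/2)^Suc n) *\<^sub>R k = ((1/2)^n) *\<^sub>R k"
        by (simp add: scaleR_left_distrib[symmetric])
      then show ?thesis unfolding a_def using Suc.IH by (metis exp_add_commuting)
    qed
    have "adjm g = g" unfolding g_def by (rule adjm_exp) (simp add: adjm_scaleR hk)
    then have "g * g = 1" using sq_herm_involution_mx gg aa by metis
    then show ?case using gg a_def by simp
  qed
  define f where "f t = exp (t *\<^sub>R k)" for t :: real
  have "(f has_vector_derivative exp (0 *\<^sub>R k) * k) (at 0)"
    unfolding f_def by (rule exp_scaleR_has_vector_derivative_right)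
  then have "(f has_derivative (\<lambda>t. t *\<^sub>R k)) (at 0)" by (simp add: has_vector_derivative_def)
  then have lim: "((\<lambda>y. norm ((f y - f 0) - (y - 0) *\<^sub>R k) / norm (y - 0)) \<longlongrightarrow> 0) (at 0)"
    by (rule has_derivative_iff_norm[THEN iffD1, THEN conjunct2])
  have seq: "filterlim (\<lambda>n. (1/2::real)^n) (at 0) sequentially"
    unfolding filterlim_at by (auto intro: LIMSEQ_realpow_zero)
  have "(\<lambda>n. norm ((f ((1/2)^n) - f 0) - ((1/2)^n - 0) *\<^sub>R k) / norm ((1/2::real)^n - 0)) \<longlonglongrightarrow> 0"
    by (rule filterlim_compose[OF lim seq])
  moreover have "norm ((f ((1/2)^n) - f 0) - ((1/2)^n - 0) *\<^sub>R k) / norm ((1/2::real)^n - 0) = norm k" for n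
    using all[of n] by (simp add: f_def)
  ultimately have "(\<lambda>n. norm k) \<longlonglongrightarrow> 0" by simp
  then show ?thesis by (simp add: LIMSEQ_const_iff)
qed

lemma of_real_mx: "(of_real r :: 'd::finite mx) = mabs (r *\<^sub>R mat 1)"
  by (simp add: of_real_def mabs_scaleR mabs_one)

lemma mlog_maxmixed: "mlog (maxmixed :: 'd::finite cmat) = (- ln (real CARD('d))) *\<^sub>R mat 1"
proof -
  define d where "d = real CARD('d)"
  have d0: "0 < d" by (simp add: d_def)
  define H0 :: "'d cmat" where "H0 = (- ln d) *\<^sub>R mat 1"
  have expc: "mexp (c *\<^sub>R mat 1 :: 'd cmat) = exp c *\<^sub>R mat 1" for c
  proof -
    have "mexp (c *\<^sub>R mat 1 :: 'd cmat) = mrep (exp (of_real c))" by (simp add: mexp_eq of_real_mx)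
    also have "\<dots> = mrep (of_real (exp c))" by (simp add: exp_of_real)
    also have "\<dots> = exp c *\<^sub>R mat 1" by (simp add: of_real_mx mabs_inverse)
    finally show ?thesis .
  qed
  have herm1: "hermitian (mat 1 :: 'd cmat)" by (simp add: hermitian_def adjoint_one)
  have P0a: "hermitian H0" unfolding H0_def by (rule hermitian_scaleR[OF herm1])
  have "mexp H0 = exp (- ln d) *\<^sub>R mat 1" unfolding H0_def by (rule expc)
  also have "exp (- ln d) = 1 / d" using d0 by (simp add: exp_minus exp_ln divide_inverse)
  finally have P0b: "mexp H0 = maxmixed" by (simp add: maxmixed_def d_def)
  have P0: "hermitian H0 \<and> mexp H0 = maxmixed" using P0a P0b by blast
  have uniq: "H = H0" if hH: "hermitian H" and eH: "mexp H = maxmixed" for H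
  proof -
    define k where "k = mabs H + (ln d) *\<^sub>R 1"
    have e1: "exp (mabs H) = (1/d) *\<^sub>R 1"
    proof -
      have "mrep (exp (mabs H)) = (1/d) *\<^sub>R mat 1" using eH by (simp add: mexp_eq maxmixed_def d_def)
      then have "mabs (mrep (exp (mabs H))) = mabs ((1/d) *\<^sub>R mat 1)" by simp
      then show ?thesis by (simp add: mrep_inverse mabs_scaleR mabs_one)
    qed
    have e2: "exp ((ln d) *\<^sub>R (1::'d mx)) = d *\<^sub>R 1"
      using exp_of_real[of "ln d", where 'a="'d mx"] d0 by (simp add: of_real_def)
    have "exp k = exp (mabs H) * exp ((ln d) *\<^sub>R 1)"
      unfolding k_def by (rule exp_add_commuting) simp
    also have "\<dots> = 1"
      using d0 by (simp add: e1 e2)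
    finally have ek: "exp k = 1" .
    have hk: "adjm k = k"
    proof -
      have "adjm (mabs H) = mabs H" using hermitian_adjm[of "mabs H"] hH by (simp add: mabs_inverse)
      moreover have "adjm (1::'d mx) = 1" using hermitian_adjm[of "1::'d mx"] herm1 unfolding mrep_one by blast
      ultimately show ?thesis unfolding k_def
        by (simp add: adjm_def mrep_add adjoint_add mabs_add mrep_scaleR adjoint_scaleR mabs_scaleR mabs_inverse)
    qed
    have "k = 0" by (rule exp_herm_one_zero[OF hk ek])
    then have "mabs H = - ((ln d) *\<^sub>R 1)" unfolding k_def by (simp add: eq_neg_iff_add_eq_0)
    then have "mrep (mabs H) = mrep ((- ln d) *\<^sub>R 1)" by simp
    then show ?thesis unfolding H0_def by (simp add: mabs_inverse mrep_scaleR mrep_one mrep_uminus)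
  qed
  have "mlog (maxmixed :: 'd cmat) = H0"
    unfolding mlog_def by (rule the_equality) (use P0 uniq in auto)
  then show ?thesis by (simp add: H0_def d_def)
qed


definition trm :: "'d::finite mx \<Rightarrow> complex" where
  "trm x = trace (mrep x)"

lemma trace_scaleR: "trace (r *\<^sub>R (A::'d::finite cmat)) = r *\<^sub>R trace A"
  by (simp add: trace_def scaleR_sum_right)

lemma linear_trace: "linear (trace :: 'd::finite cmat \<Rightarrow> complex)"
  by (rule linearI) (simp_all add: trace_add trace_scaleR)

lemma bl_trace: "bounded_linear (trace :: 'd::finite cmat \<Rightarrow> complex)"
  using linear_conv_bounded_linear linear_trace by blast

lemma bl_trm: "bounded_linear (trm :: 'd::finite mx \<Rightarrow> complex)"
  unfolding trm_def[abs_def] by (rule bounded_linear_compose[OF bl_trace bl_mrep])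

lemma trm_comm: "trm (x * y) = trm (y * x)"
  unfolding trm_def mrep_mult by (rule trace_mul_sym)

lemma trm_add: "trm (x + y) = trm x + trm y"
  by (simp add: trm_def mrep_add trace_add)

lemma trm_Dp:
  assumes "C * A = A * (C::'d::finite mx)"
  shows "trm (C * Dp (Suc n) A H) = of_nat (Suc n) * trm (C * A^n * H)"
  using assms
proof (induction n arbitrary: C)
  case 0
  then show ?case by simp
next
  case (Suc n)
  have cA: "(C * A) * A = A * (C * A)" using Suc.prems by (simp add: mult.assoc)
  have "trm (C * Dp (Suc (Suc n)) A H) = trm ((C * A) * Dp (Suc n) A H) + trm (C * (H * A^Suc n))"
    by (simp add: distrib_left trm_add mult.assoc)
  also have "trm ((C * A) * Dp (Suc n) A H) = of_nat (Suc n) * trm (C * A^Suc n * H)"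
    using Suc.IH[OF cA] by (simp add: mult.assoc)
  also have "trm (C * (H * A^Suc n)) = trm (C * A^Suc n * H)"
  proof -
    have "trm (C * (H * A^Suc n)) = trm (A^Suc n * (C * H))" by (metis trm_comm mult.assoc)
    also have "A^Suc n * C = C * A^Suc n" by (rule power_commuting_commutes) (rule Suc.prems[symmetric])
    then have "A^Suc n * (C * H) = C * A^Suc n * H" by (metis mult.assoc)
    finally show ?thesis .
  qed
  finally show ?case by (simp add: algebra_simps)
qed

definition Dexp :: "'a::{real_normed_algebra_1,banach} \<Rightarrow> 'a \<Rightarrow> 'a" where
  "Dexp A H = (\<Sum>n. Dp n A H /\<^sub>R fact n)"

lemma trm_scaleR: "trm (r *\<^sub>R x) = of_real r * trm x"
  unfolding trm_def mrep_scaleR trace_scaleR by (simp only: scaleR_conv_of_real)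

lemma trm_Dexp: "trm (Dexp A H) = trm (exp A * (H::'d::finite mx))"
proof -
  have s1: "(\<lambda>n. trm (Dp n A H /\<^sub>R fact n)) sums trm (Dexp A H)"
    unfolding Dexp_def by (rule bounded_linear.sums[OF bl_trm summable_sums[OF summable_Dp]])
  have "(\<lambda>n. trm (Dp (Suc n) A H /\<^sub>R fact (Suc n))) sums trm (Dexp A H)"
    using s1 sums_Suc_iff[of "\<lambda>n. trm (Dp n A H /\<^sub>R fact n)"] by (simp add: trm_def mrep_zero trace_0[unfolded mat_0])
  moreover have "trm (Dp (Suc n) A H /\<^sub>R fact (Suc n)) = trm ((A^n /\<^sub>R fact n) * H)" for n
  proof -
    have "trm (Dp (Suc n) A H) = of_nat (Suc n) * trm (A^n * H)"
      using trm_Dp[of 1 A n H] by simp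
    have sc: "inverse (fact (Suc n)) * real (Suc n) = inverse (fact n :: real)"
      by (simp add: fact_Suc field_simps del: of_nat_Suc)
    have "trm (Dp (Suc n) A H /\<^sub>R fact (Suc n)) = of_real (inverse (fact (Suc n))) * (of_nat (Suc n) * trm (A^n * H))"
      by (simp only: trm_scaleR \<open>trm (Dp (Suc n) A H) = of_nat (Suc n) * trm (A^n * H)\<close>)
    also have "\<dots> = of_real (inverse (fact (Suc n)) * real (Suc n)) * trm (A^n * H)"
      by (simp only: of_real_mult of_real_of_nat_eq mult.assoc)
    also have "\<dots> = of_real (inverse (fact n)) * trm (A^n * H)" by (simp only: sc)
    also have "\<dots> = trm ((A^n /\<^sub>R fact n) * H)"
      by (simp only: scaleR_left_commute[symmetric] mult_scaleR_left trm_scaleR)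
    finally show ?thesis .
  qed
  moreover have "(\<lambda>n. trm ((A^n /\<^sub>R fact n) * H)) sums trm (exp A * H)"
    by (rule bounded_linear.sums[OF bounded_linear_compose[OF bl_trm bounded_linear_mult_left] exp_converges])
  ultimately show ?thesis using sums_unique2 by fastforce
qed


lemma trace_zero: "trace (0::'d::finite cmat) = 0"
  by (simp add: trace_def)

lemma lin_comb_add: "lin_comb (a + b) F = lin_comb a F + lin_comb b F"
  by (simp add: lin_comb_def scaleR_add_left sum.distrib)

lemma lin_comb_scaleR: "lin_comb (r *\<^sub>R a) F = r *\<^sub>R lin_comb a F"
  by (simp add: lin_comb_def scaleR_sum_right)

lemma bl_lin_comb: "bounded_linear (\<lambda>l. lin_comb l F)"
proof -
  have "linear (\<lambda>l. lin_comb l F)" by (rule linearI) (simp_all add: lin_comb_add lin_comb_scaleR)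
  then show ?thesis using linear_conv_bounded_linear by blast
qed

lemma lin_comb_axis: "lin_comb (axis j 1) F = F j"
proof -
  have "lin_comb (axis j 1) F = (\<Sum>i\<in>UNIV. if i = j then F i else 0)"
    unfolding lin_comb_def by (rule sum.cong) (auto simp: axis_def)
  then show ?thesis by simp
qed

definition Xl :: "('k::finite \<Rightarrow> 'd::finite cmat) \<Rightarrow> real^'k \<Rightarrow> 'd mx" where
  "Xl F l = mabs (lin_comb l F)"

lemma bl_Xl: "bounded_linear (Xl F)"
  unfolding Xl_def[abs_def] by (rule bounded_linear_compose[OF bl_mabs bl_lin_comb])

lemma Em_deriv: "((\<lambda>l. exp (Xl F l)) has_derivative (\<lambda>h. Dexp (Xl F l) (Xl F h))) (at l)"
  using has_derivative_compose[OF bounded_linear.has_derivative[OF bl_Xl has_derivative_ident]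
      exp_has_derivative_gen[of "Xl F l"]]
  unfolding Dexp_def by simp

lemma trace_mult_sum:
  "finite S \<Longrightarrow> trace (E ** (\<Sum>j\<in>S. c j *\<^sub>R B j)) = (\<Sum>j\<in>S. c j *\<^sub>R trace (E ** (B j::'d::finite cmat)))"
proof (induction S rule: finite_induct)
  case empty
  then show ?case by (simp add: trace_zero)
next
  case (insert x S)
  then show ?case
    by (simp add: matrix_add_ldistrib trace_add matrix_scalar_ac scalar_matrix_assoc[symmetric] trace_scaleR)
qed

lemma hermitian_lin_comb:
  assumes "\<forall>j. hermitian (F j)"
  shows "hermitian (lin_comb l F)"
proof -
  have "adjoint_mat (\<Sum>j\<in>S. l $ j *\<^sub>R F j) = (\<Sum>j\<in>S. l $ j *\<^sub>R F j)" if "finite S" for S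
    using that
  proof (induction S rule: finite_induct)
    case empty
    then show ?case by (simp add: adjoint_mat_def vec_eq_iff)
  next
    case (insert x S)
    then show ?case using assms by (simp add: adjoint_add adjoint_scaleR hermitian_def)
  qed
  then show ?thesis by (simp add: hermitian_def lin_comb_def)
qed

definition Zf :: "('k::finite \<Rightarrow> 'd::finite cmat) \<Rightarrow> real^'k \<Rightarrow> real" where
  "Zf F l = Re (trace (mrep (exp (Xl F l))))"

definition gf :: "('k::finite \<Rightarrow> 'd::finite cmat) \<Rightarrow> 'k \<Rightarrow> real^'k \<Rightarrow> real" where
  "gf F j l = Re (trace (mrep (exp (Xl F l)) ** F j)) / Zf F l"

lemma mexp_lin_comb: "mexp (lin_comb l F) = mrep (exp (Xl F l))"
  by (simp add: mexp_eq Xl_def)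

lemma Zf_pos: "\<forall>j. hermitian (F j) \<Longrightarrow> 0 < Zf F l"
  using trace_exp_pos[OF hermitian_lin_comb, of F l] by (simp add: Zf_def mexp_lin_comb)

lemma bl_Re_trm: "bounded_linear (\<lambda>x. Re (trm x))"
  by (rule bounded_linear_compose[OF bounded_linear_Re bl_trm])

lemma Zf_deriv:
  "(Zf F has_derivative (\<lambda>h. Re (trace (mrep (exp (Xl F l)) ** lin_comb h F)))) (at l)"
proof -
  have "((\<lambda>l. Re (trm (exp (Xl F l)))) has_derivative (\<lambda>h. Re (trm (Dexp (Xl F l) (Xl F h))))) (at l)"
    by (rule bounded_linear.has_derivative[OF bl_Re_trm Em_deriv])
  moreover have "(\<lambda>l. Re (trm (exp (Xl F l)))) = Zf F" by (rule ext) (simp add: Zf_def trm_def)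
  moreover have "(\<lambda>h. Re (trm (Dexp (Xl F l) (Xl F h)))) = (\<lambda>h. Re (trace (mrep (exp (Xl F l)) ** lin_comb h F)))"
  proof (rule ext)
    fix h
    have "trm (Dexp (Xl F l) (Xl F h)) = trm (exp (Xl F l) * Xl F h)" by (rule trm_Dexp)
    then show "Re (trm (Dexp (Xl F l) (Xl F h))) = Re (trace (mrep (exp (Xl F l)) ** lin_comb h F))"
      by (simp add: trm_def mrep_mult Xl_def mabs_inverse)
  qed
  ultimately show ?thesis by simp
qed

lemma log_partition_eq: "log_partition F l = ln (Zf F l)"
  by (simp add: log_partition_def Zf_def mexp_lin_comb)

lemma log_partition_deriv:
  assumes "\<forall>j. hermitian (F j)"
  shows "(log_partition F has_derivative
           (\<lambda>h. Re (trace (mrep (exp (Xl F l)) ** lin_comb h F)) * inverse (Zf F l))) (at l)"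
proof -
  have "((\<lambda>l. ln (Zf F l)) has_derivative
           (\<lambda>h. Re (trace (mrep (exp (Xl F l)) ** lin_comb h F)) * inverse (Zf F l))) (at l)"
    by (rule DERIV_compose_FDERIV[OF DERIV_ln[OF Zf_pos[OF assms]] Zf_deriv])
  moreover have "(\<lambda>l. ln (Zf F l)) = log_partition F" by (rule ext) (simp add: log_partition_eq)
  ultimately show ?thesis by simp
qed

lemma gradient_log_partition:
  assumes "\<forall>j. hermitian (F j)"
  shows "gradient (log_partition F) = (\<lambda>l. \<chi> j. gf F j l)"
proof (rule ext)
  fix l
  have "frechet_derivative (log_partition F) (at l) =
        (\<lambda>h. Re (trace (mrep (exp (Xl F l)) ** lin_comb h F)) * inverse (Zf F l))"
    by (rule frechet_derivative_at[OF log_partition_deriv[OF assms], symmetric])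
  then show "gradient (log_partition F) l = (\<chi> j. gf F j l)"
    by (simp add: gradient_def gf_def lin_comb_axis divide_inverse)
qed

lemma bl_Re_trace_mult: "bounded_linear (\<lambda>x. Re (trace (mrep x ** (B::'d::finite cmat))))"
proof -
  have "bounded_linear (\<lambda>x. Re (trm (x * mabs B)))"
    by (rule bounded_linear_compose[OF bl_Re_trm bounded_linear_mult_left])
  then show ?thesis by (simp add: trm_def mrep_mult mabs_inverse)
qed

lemma gf_deriv:
  assumes "\<forall>j. hermitian (F j)"
  shows "\<exists>D. (gf F j has_derivative D) (at l)"
proof -
  have num: "((\<lambda>l. Re (trace (mrep (exp (Xl F l)) ** F j))) has_derivative
     (\<lambda>h. Re (trace (mrep (Dexp (Xl F l) (Xl F h)) ** F j)))) (at l)"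
    by (rule bounded_linear.has_derivative[OF bl_Re_trace_mult Em_deriv])
  have "Zf F l \<noteq> 0" using Zf_pos[OF assms, of l] by simp
  note has_derivative_divide[OF num Zf_deriv this]
  moreover have "(\<lambda>l. Re (trace (mrep (exp (Xl F l)) ** F j)) / Zf F l) = gf F j"
    by (rule ext) (simp add: gf_def)
  ultimately show ?thesis by auto
qed

lemma vec_lambda_sum_axis: "(\<chi> j. c j) = (\<Sum>j\<in>UNIV. c j *\<^sub>R axis j (1::real))"
proof -
  have "(\<Sum>j\<in>UNIV. c j *\<^sub>R axis j (1::real)) $ i = c i" for i
  proof -
    have "(\<Sum>j\<in>UNIV. c j *\<^sub>R axis j (1::real)) $ i = (\<Sum>j\<in>UNIV. if j = i then c j else 0)"
      unfolding sum_component by (rule sum.cong) (auto simp: axis_def)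
    then show ?thesis by simp
  qed
  then show ?thesis by (simp add: vec_eq_iff)
qed

lemma has_derivative_vec_lambda:
  fixes f :: "'k::finite \<Rightarrow> 'a::real_normed_vector \<Rightarrow> real"
  assumes "\<And>j. (f j has_derivative f' j) (at x)"
  shows "((\<lambda>x. \<chi> j. f j x) has_derivative (\<lambda>h. \<chi> j. f' j h)) (at x)"
proof -
  have "((\<lambda>x. \<Sum>j\<in>UNIV. f j x *\<^sub>R axis j (1::real)) has_derivative (\<lambda>h. \<Sum>j\<in>UNIV. f' j h *\<^sub>R axis j (1::real))) (at x)"
    by (intro has_derivative_sum has_derivative_scaleR_left assms)
  then show ?thesis by (simp only: vec_lambda_sum_axis[symmetric])
qed


lemma mabs_diff: "mabs (a - b) = mabs a - mabs b" by transfer simp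
lemma mabs_uminus: "mabs (- a) = - mabs a" by transfer simp

lemma trace_mdiv: "trace (B ** mdiv X t) = trace (B ** X) / (t::complex)"
  by (simp add: trace_def matrix_matrix_mult_def mdiv_def sum_divide_distrib)

lemma hs_inner_herm: "hermitian B \<Longrightarrow> hs_inner B X = trace (B ** X)"
  by (simp add: hs_inner_def hermitian_def)

lemma hs_mdiv:
  assumes hB: "hermitian B" and hE: "hermitian (E::'d::finite cmat)" and c: "c \<noteq> 0"
  shows "Re (hs_inner B (mdiv (c *\<^sub>R E) (trace (c *\<^sub>R E)))) = Re (trace (E ** B)) / Re (trace E)"
proof -
  have t1: "trace (B ** (c *\<^sub>R E)) = of_real c * trace (B ** E)"
  proof -
    have "trace (B ** (c *\<^sub>R E)) = c *\<^sub>R trace (B ** E)"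
      by (simp add: matrix_scalar_ac scalar_matrix_assoc[symmetric] trace_scaleR)
    then show ?thesis by (simp only: scaleR_conv_of_real)
  qed
  have t2: "trace (c *\<^sub>R E) = of_real c * trace E"
  proof -
    have "trace (c *\<^sub>R E) = c *\<^sub>R trace E" by (rule trace_scaleR)
    then show ?thesis by (simp only: scaleR_conv_of_real)
  qed
  have eq1: "hs_inner B (mdiv (c *\<^sub>R E) (trace (c *\<^sub>R E))) = trace (B ** E) / trace E"
    unfolding hs_inner_herm[OF hB] trace_mdiv t1 t2 using c by simp
  have tE: "trace E = of_real (Re (trace E))" by (rule trace_herm_of_real[OF hE])
  have "Re (hs_inner B (mdiv (c *\<^sub>R E) (trace (c *\<^sub>R E)))) = Re (trace (B ** E) / of_real (Re (trace E)))"
    by (subst eq1, subst tE, simp)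
  also have "\<dots> = Re (trace (B ** E)) / Re (trace E)" by (rule Re_divide_of_real)
  finally show ?thesis by (simp only: trace_mul_sym[of B E])
qed

lemma Y_eq:
  "mexp (mlog (maxmixed :: 'd::finite cmat) + lin_comb l F) = (1 / real CARD('d)) *\<^sub>R mrep (exp (Xl F l))"
proof -
  define c where "c = - ln (real CARD('d))"
  have "mabs (mlog (maxmixed :: 'd cmat) + lin_comb l F) = c *\<^sub>R 1 + Xl F l"
    by (simp add: mlog_maxmixed c_def mabs_add mabs_diff mabs_uminus mabs_scaleR mabs_one Xl_def)
  moreover have "exp (c *\<^sub>R (1::'d mx) + Xl F l) = exp (c *\<^sub>R 1) * exp (Xl F l)"
    by (rule exp_add_commuting) simp
  moreover have "exp (c *\<^sub>R (1::'d mx)) = exp c *\<^sub>R 1"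
    using exp_of_real[of c, where 'a="'d mx"] by (simp add: of_real_def)
  moreover have "exp c = 1 / real CARD('d)" by (simp add: c_def exp_minus divide_inverse)
  ultimately show ?thesis by (simp add: mexp_eq mrep_scaleR)
qed

lemma qis_map_eq:
  assumes herm: "\<forall>j. hermitian (F j)"
  shows "qis_map F \<rho>0 l = l + (\<chi> j. ln (Re (hs_inner (F j) \<rho>0)) - ln (gf F j l))"
proof -
  have hE: "hermitian (mrep (exp (Xl F l)))"
    using hermitian_mexp[OF hermitian_lin_comb[OF herm, of l]] by (simp add: mexp_lin_comb)
  have "Re (hs_inner (F j) (mdiv (mexp (mlog maxmixed + lin_comb l F)) (trace (mexp (mlog maxmixed + lin_comb l F)))))
        = gf F j l" for j
    unfolding Y_eq gf_def Zf_def
    by (rule hs_mdiv[OF herm[rule_format] hE]) simp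
  then show ?thesis by (simp add: qis_map_def Let_def)
qed

lemma pos_Y_eq:
  assumes herm: "\<forall>j. hermitian (F j)"
  shows "Re (hs_inner (F j) (mdiv (mexp (mlog maxmixed + lin_comb l F)) (trace (mexp (mlog maxmixed + lin_comb l F)))))
        = gf F j l"
proof -
  have hE: "hermitian (mrep (exp (Xl F l)))"
    using hermitian_mexp[OF hermitian_lin_comb[OF herm, of l]] by (simp add: mexp_lin_comb)
  show ?thesis
    unfolding Y_eq gf_def Zf_def
    by (rule hs_mdiv[OF herm[rule_format] hE]) simp
qed

lemma P_mat_eq:
  assumes herm: "\<forall>j. hermitian (F j)"
  shows "P_mat F l = (\<chi> i j. if i = j then gf F j l else 0)"
proof -
  have hE: "hermitian (mrep (exp (Xl F l)))"
    using hermitian_mexp[OF hermitian_lin_comb[OF herm, of l]] by (simp add: mexp_lin_comb)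
  have eq: "Re (trace (F j ** xi_state F l)) = gf F j l" for j
  proof -
    have "Re (hs_inner (F j) (mdiv (1 *\<^sub>R mrep (exp (Xl F l))) (trace (1 *\<^sub>R mrep (exp (Xl F l)))))) = gf F j l"
      unfolding gf_def Zf_def by (rule hs_mdiv[OF herm[rule_format] hE]) simp
    then show ?thesis
      by (simp add: hs_inner_herm[OF herm[rule_format]] xi_state_def mexp_lin_comb)
  qed
  show ?thesis unfolding P_mat_def eq ..
qed

lemma matrix_inv_diag:
  fixes p :: "'k::finite \<Rightarrow> real"
  assumes "\<forall>j. p j \<noteq> 0"
  shows "matrix_inv (\<chi> i j. if i = j then p j else 0) = (\<chi> i j. if i = j then inverse (p j) else 0)"
proof -
  define P :: "real^'k^'k" where "P = (\<chi> i j. if i = j then p j else 0)"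
  define Q :: "real^'k^'k" where "Q = (\<chi> i j. if i = j then inverse (p j) else 0)"
  have s1: "(\<Sum>k\<in>UNIV. (if i = k then a k else 0) * (if k = j then c else 0)) = (if i = j then a i * c else (0::real))"
    for i j :: 'k and a :: "'k \<Rightarrow> real" and c :: real
  proof -
    have "(\<Sum>k\<in>UNIV. (if i = k then a k else 0) * (if k = j then c else 0))
        = (\<Sum>k\<in>UNIV. if k = i then (if i = j then a i * c else 0) else 0)"
      by (rule sum.cong) auto
    then show ?thesis by simp
  qed
  have PQ: "P ** Q = mat 1"
    unfolding P_def Q_def matrix_matrix_mult_def mat_def
    by (simp only: vec_lambda_beta s1) (use assms in \<open>simp add: vec_eq_iff\<close>)
  have QP: "Q ** P = mat 1"
    unfolding P_def Q_def matrix_matrix_mult_def mat_def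
    by (simp only: vec_lambda_beta s1) (use assms in \<open>simp add: vec_eq_iff\<close>)
  define R where "R = matrix_inv P"
  have "P ** R = mat 1 \<and> R ** P = mat 1"
    unfolding R_def matrix_inv_def by (rule someI[of _ Q]) (use PQ QP in blast)
  then have "R = Q" by (metis PQ matrix_mul_assoc matrix_mul_lid matrix_mul_rid)
  then show ?thesis by (simp add: R_def P_def Q_def)
qed



theorem theorem4p1:
  fixes F :: "'k::finite \<Rightarrow> complex^'d::finite^'d"
    and \<rho>0 :: "complex^'d^'d"
    and lam :: "real^'k"
  assumes F_psd: "\<forall>j. psd (F j)"
    and F_sum: "loewner_le (\<Sum>j\<in>UNIV. F j) (mat 1)"
    and rho0: "density_matrix \<rho>0"
    and pos_rho: "\<forall>j. 0 < Re (hs_inner (F j) \<rho>0)"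
    and pos_Y: "\<forall>j. 0 < Re (hs_inner (F j)
               (mdiv (mexp (mlog maxmixed + lin_comb lam F))
                     (trace (mexp (mlog maxmixed + lin_comb lam F)))))"
  shows "qis_map F \<rho>0 differentiable (at lam) \<and>
         jacobian (qis_map F \<rho>0) (at lam) =
           mat 1 - matrix_inv (P_mat F lam) ** hessian (log_partition F) lam"
proof -
  have herm: "\<forall>j. hermitian (F j)" using F_psd by (simp add: psd_def)
  have gpos: "0 < gf F j lam" for j
    using pos_Y[rule_format, of j] pos_Y_eq[OF herm, of j lam] by metis
  have "\<forall>j. \<exists>D. (gf F j has_derivative D) (at lam)"
    using gf_deriv[OF herm] by blast
  then obtain D where D: "\<And>j. (gf F j has_derivative D j) (at lam)"
    by metis
  define G where "G = (\<lambda>l. \<chi> j. gf F j l)"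
  define G' where "G' = (\<lambda>h. \<chi> j. D j h)"
  have GD: "(G has_derivative G') (at lam)"
    unfolding G_def G'_def by (rule has_derivative_vec_lambda[OF D])
  have hess: "hessian (log_partition F) lam = matrix G'"
    unfolding hessian_def jacobian_def gradient_log_partition[OF herm] G_def[symmetric]
    using frechet_derivative_at[OF GD] by simp
  define c where "c j = ln (Re (hs_inner (F j) \<rho>0))" for j
  have qeq: "qis_map F \<rho>0 = (\<lambda>l. l + (\<chi> j. c j - ln (gf F j l)))"
    by (rule ext) (simp add: qis_map_eq[OF herm] c_def)
  define Q' where "Q' = (\<lambda>h::real^'k. h + (\<chi> j. 0 - D j h * inverse (gf F j lam)))"
  have comp: "((\<lambda>l. c j - ln (gf F j l)) has_derivative (\<lambda>h. 0 - D j h * inverse (gf F j lam))) (at lam)" for j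
    by (rule has_derivative_diff[OF has_derivative_const DERIV_compose_FDERIV[OF DERIV_ln[OF gpos] D]])
  have QD: "(qis_map F \<rho>0 has_derivative Q') (at lam)"
    unfolding qeq Q'_def
    by (rule has_derivative_add[OF has_derivative_ident has_derivative_vec_lambda[OF comp]])
  have jac: "jacobian (qis_map F \<rho>0) (at lam) = matrix Q'"
    unfolding jacobian_def using frechet_derivative_at[OF QD] by simp
  have Pinv: "matrix_inv (P_mat F lam) = (\<chi> i j. if i = j then inverse (gf F j lam) else 0)"
    unfolding P_mat_eq[OF herm] by (rule matrix_inv_diag) (use gpos in \<open>auto simp: less_le\<close>)
  have eq: "matrix Q' = mat 1 - matrix_inv (P_mat F lam) ** matrix G'"
  proof -
    have s1: "(\<Sum>k\<in>UNIV. (if i = k then inverse (gf F k lam) else 0) * X k) = inverse (gf F i lam) * X i"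
      for i and X :: "'k \<Rightarrow> real"
    proof -
      have "(\<Sum>k\<in>UNIV. (if i = k then inverse (gf F k lam) else 0) * X k)
          = (\<Sum>k\<in>UNIV. if k = i then inverse (gf F i lam) * X i else 0)"
        by (rule sum.cong) auto
      then show ?thesis by simp
    qed
    show ?thesis
      unfolding Pinv
      by (simp add: vec_eq_iff matrix_def Q'_def G'_def matrix_matrix_mult_def mat_def axis_def s1)
  qed
  show ?thesis
    using QD jac eq hess differentiableI by metis
qed


end
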